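(* The class of context-free languages is not closed under ${\rm bdir}$; for instance, for the context-free language $L=\{0^{2m}1^{4m}2^n3^n : m,n\ge1\}$, ${\rm bdir}(L)\cap(03)^+(13)^+(22)^+=\{(03)^{2m}(13)^{4m}(22)^{3m}:m\ge1\}$, so ${\rm bdir}(L)$ is not context-free.
   Context: For $w=a_1\cdots a_{2n}$ of even length, ${\rm bdir}(w)=a_1a_{2n}a_2a_{2n-1}\cdots a_na_{n+1}$; for $w=a_1\cdots a_{2n+1}$ of odd length, ${\rm bdir}(w)=a_1a_{2n+1}a_2a_{2n}\cdots a_na_{n+2}a_{n+1}$. ${\rm bdir}(L)=\{{\rm bdir}(w):w\in L\}$. *)

theory Defs
  imports Main
begin

datatype ('n, 't) sym = NT 'n | Tm 't

definition derive1 :: "('n \<times> ('n, 't) sym list) set \<Rightarrow> ('n, 't) sym list \<Rightarrow> ('n, 't) sym list \<Rightarrow> bool" where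
  "derive1 P u v \<longleftrightarrow> (\<exists>l A r \<alpha>. u = l @ [NT A] @ r \<and> (A, \<alpha>) \<in> P \<and> v = l @ \<alpha> @ r)"

definition Lang :: "('n \<times> ('n, 't) sym list) set \<Rightarrow> 'n \<Rightarrow> 't list set" where
  "Lang P S = {w. (derive1 P)\<^sup>*\<^sup>* [NT S] (map Tm w)}"

(* a language is context-free iff it is generated by a finite context-free grammar;
   nonterminals are taken from nat, which is w.l.o.g. for finite grammars *)
definition CFL :: "'t list set \<Rightarrow> bool" where
  "CFL L \<longleftrightarrow> (\<exists>(P :: (nat \<times> (nat, 't) sym list) set) S. finite P \<and> L = Lang P S)"

(* bdir(a_1 ... a_k) = a_1 a_k a_2 a_{k-1} ...: position i (0-based) takes w!(i div 2) for even i,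
   and w!(k-1-i div 2) for odd i *)
definition bdir :: "'a list \<Rightarrow> 'a list" where
  "bdir w = map (\<lambda>i. if even i then w ! (i div 2) else w ! (length w - 1 - i div 2)) [0..<length w]"

definition wpow :: "'a list \<Rightarrow> nat \<Rightarrow> 'a list" where
  "wpow u n = concat (replicate n u)"

end

theory Submission
  imports Defs
begin


datatype ('n,'t) tree = Leaf 't | Node 'n "('n,'t) tree list"

fun root :: "('n,'t) tree \<Rightarrow> ('n,'t) sym" where
  "root (Leaf a) = Tm a" | "root (Node A ts) = NT A"

fun yield :: "('n,'t) tree \<Rightarrow> 't list" where
  "yield (Leaf a) = [a]" | "yield (Node A ts) = concat (map yield ts)"

fun wft :: "('n \<times> ('n,'t) sym list) set \<Rightarrow> ('n,'t) tree \<Rightarrow> bool" where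
  "wft P (Leaf a) = True"
| "wft P (Node A ts) = ((A, map root ts) \<in> P \<and> (\<forall>t\<in>set ts. wft P t))"

fun tsize :: "('n,'t) tree \<Rightarrow> nat" where
  "tsize (Leaf a) = 1" | "tsize (Node A ts) = Suc (sum_list (map tsize ts))"

fun height :: "('n,'t) tree \<Rightarrow> nat" where
  "height (Leaf a) = 0" | "height (Node A ts) = Suc (foldr max (map height ts) 0)"

fun plug :: "('n \<times> ('n,'t) tree list \<times> ('n,'t) tree list) list \<Rightarrow> ('n,'t) tree \<Rightarrow> ('n,'t) tree" where
  "plug [] s = s" | "plug ((A,ls,rs)#c) s = Node A (ls @ plug c s # rs)"

fun lyield :: "('n \<times> ('n,'t) tree list \<times> ('n,'t) tree list) list \<Rightarrow> 't list" where
  "lyield [] = []" | "lyield ((A,ls,rs)#c) = concat (map yield ls) @ lyield c"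

fun ryield :: "('n \<times> ('n,'t) tree list \<times> ('n,'t) tree list) list \<Rightarrow> 't list" where
  "ryield [] = []" | "ryield ((A,ls,rs)#c) = ryield c @ concat (map yield rs)"

lemma yield_plug: "yield (plug c s) = lyield c @ yield s @ ryield c"
  by (induction c rule: lyield.induct) auto

lemma plug_append: "plug (c @ d) s = plug c (plug d s)"
  by (induction c rule: lyield.induct) auto

lemma lyield_append: "lyield (c @ d) = lyield c @ lyield d"
  by (induction c rule: lyield.induct) auto

lemma wft_plug: "wft P (plug c s) \<Longrightarrow> wft P s"
  by (induction c rule: lyield.induct) auto

lemma root_plug: "root s = root s' \<Longrightarrow> root (plug c s) = root (plug c s')"
  by (cases c) auto

lemma wft_plug_replace: "wft P (plug c s) \<Longrightarrow> wft P s' \<Longrightarrow> root s' = root s \<Longrightarrow> wft P (plug c s')"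
proof (induction c rule: lyield.induct)
  case (2 A ls rs c)
  then show ?case using root_plug[of s' s c] by auto
qed auto

lemma tsize_pos: "tsize t > 0" by (cases t) auto

lemma tsize_plug_mono: "tsize s' < tsize s \<Longrightarrow> tsize (plug c s') < tsize (plug c s)"
  by (induction c rule: lyield.induct) auto

lemma tsize_plug_less: "c \<noteq> [] \<Longrightarrow> tsize s < tsize (plug c s)"
proof (induction c rule: lyield.induct)
  case (2 A ls rs c)
  then show ?case by (cases "c = []") auto
qed auto

lemma root_Tm: "root t = Tm a \<longleftrightarrow> t = Leaf a" by (cases t) auto
lemma root_NT: "root t = NT A \<longleftrightarrow> (\<exists>ts. t = Node A ts)" by (cases t) auto

lemma derive1_ctx: "derive1 P u v \<Longrightarrow> derive1 P (l@u@r) (l@v@r)"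
proof -
  assume "derive1 P u v"
  then obtain l' A r' \<alpha> where "u = l' @ [NT A] @ r'" "(A, \<alpha>) \<in> P" "v = l' @ \<alpha> @ r'"
    unfolding derive1_def by blast
  then show ?thesis unfolding derive1_def
    by (intro exI[of _ "l @ l'"] exI[of _ A] exI[of _ "r' @ r"] exI[of _ \<alpha>]) simp
qed

lemma derives_ctx: "(derive1 P)\<^sup>*\<^sup>* u v \<Longrightarrow> (derive1 P)\<^sup>*\<^sup>* (l@u@r) (l@v@r)"
proof (induction rule: rtranclp_induct)
  case (step y z)
  have "derive1 P (l@y@r) (l@z@r)" using step(2) by (rule derive1_ctx)
  with step(3) show ?case by (rule rtranclp.rtrancl_into_rtrancl)
qed simp

lemma forest_derives:
  "(\<forall>t\<in>set ts. (derive1 P)\<^sup>*\<^sup>* [root t] (map Tm (yield t))) \<Longrightarrow>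
   (derive1 P)\<^sup>*\<^sup>* (map root ts) (map Tm (concat (map yield ts)))"
proof (induction ts)
  case (Cons t ts)
  have 1: "(derive1 P)\<^sup>*\<^sup>* ([root t] @ map root ts) (map Tm (yield t) @ map root ts)"
    using Cons derives_ctx[of P "[root t]" "map Tm (yield t)" "[]" "map root ts"] by auto
  have 2: "(derive1 P)\<^sup>*\<^sup>* (map Tm (yield t) @ map root ts) (map Tm (yield t) @ map Tm (concat (map yield ts)))"
    using Cons derives_ctx[of P "map root ts" "map Tm (concat (map yield ts))" "map Tm (yield t)" "[]"] by auto
  show ?case using rtranclp_trans[OF 1 2] by simp
qed auto

lemma tree_derives: "wft P t \<Longrightarrow> (derive1 P)\<^sup>*\<^sup>* [root t] (map Tm (yield t))"
proof (induction t)
  case (Node A ts)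
  then have f: "(derive1 P)\<^sup>*\<^sup>* (map root ts) (map Tm (concat (map yield ts)))"
    by (intro forest_derives) auto
  have "derive1 P [NT A] (map root ts)"
    unfolding derive1_def using Node.prems by (intro exI[of _ "[]"]) auto
  then show ?case using f by (simp add: converse_rtranclp_into_rtranclp)
qed auto

lemma derives_forest:
  "(derive1 P)\<^sup>*\<^sup>* \<alpha> \<beta> \<Longrightarrow> \<beta> = map Tm w \<Longrightarrow>
   \<exists>ts. (\<forall>t\<in>set ts. wft P t) \<and> map root ts = \<alpha> \<and> concat (map yield ts) = w"
proof (induction rule: converse_rtranclp_induct)
  case base
  then show ?case by (intro exI[of _ "map Leaf w"]) (auto simp: o_def)
next
  case (step a a')
  then obtain ts where ts: "\<forall>t\<in>set ts. wft P t" "map root ts = a'" "concat (map yield ts) = w" by auto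
  from step(1) obtain l A r \<gamma> where d: "a = l @ [NT A] @ r" "(A,\<gamma>) \<in> P" "a' = l @ \<gamma> @ r"
    unfolding derive1_def by blast
  from ts(2) d(3) have "map root ts = l @ (\<gamma> @ r)" by simp
  then obtain ts1 ts23 where 1: "ts = ts1 @ ts23" "l = map root ts1" "\<gamma> @ r = map root ts23"
    unfolding map_eq_append_conv by blast
  from 1(3) have "map root ts23 = \<gamma> @ r" by simp
  then obtain ts2 ts3 where 2: "ts23 = ts2 @ ts3" "\<gamma> = map root ts2" "r = map root ts3"
    unfolding map_eq_append_conv by blast
  show ?case using ts d 1 2
    by (intro exI[of _ "ts1 @ [Node A ts2] @ ts3"]) auto
qed

lemma Lang_tree: "w \<in> Lang P S \<longleftrightarrow> (\<exists>t. wft P t \<and> root t = NT S \<and> yield t = w)"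
proof
  assume "w \<in> Lang P S"
  then have "(derive1 P)\<^sup>*\<^sup>* [NT S] (map Tm w)" unfolding Lang_def by simp
  from derives_forest[OF this refl] obtain ts where
    "(\<forall>t\<in>set ts. wft P t) \<and> map root ts = [NT S] \<and> concat (map yield ts) = w"
    by (rule exE)
  then have ts: "\<forall>t\<in>set ts. wft P t" "map root ts = [NT S]" "concat (map yield ts) = w" by auto
  from ts(2) obtain t where "ts = [t]" "root t = NT S" by (cases ts) auto
  then show "\<exists>t. wft P t \<and> root t = NT S \<and> yield t = w" using ts by auto
next
  assume "\<exists>t. wft P t \<and> root t = NT S \<and> yield t = w"
  then obtain t where "wft P t" "root t = NT S" "yield t = w" by blast
  then show "w \<in> Lang P S" unfolding Lang_def using tree_derives[of P t] by simp
qed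



definition rep :: "('s \<Rightarrow> 't \<Rightarrow> 's) \<Rightarrow> 's \<Rightarrow> ('n,'t) tree \<Rightarrow> bool" where
  "rep \<delta> q t \<longleftrightarrow> (\<exists>c1 c2 s. c2 \<noteq> [] \<and> t = plug c1 (plug c2 s) \<and> root (plug c2 s) = root s
     \<and> foldl \<delta> q (lyield c1) = foldl \<delta> q (lyield c1 @ lyield c2)
     \<and> foldl \<delta> q (lyield c1 @ lyield c2 @ yield s) = foldl \<delta> q (lyield c1 @ lyield c2 @ yield s @ ryield c2))"

definition labs :: "('s \<Rightarrow> 't \<Rightarrow> 's) \<Rightarrow> 's \<Rightarrow> ('n,'t) tree \<Rightarrow> ('n \<times> 's \<times> 's) set" where
  "labs \<delta> q t = {(A, foldl \<delta> q (lyield c), foldl \<delta> q (lyield c @ yield s)) | A c s. t = plug c s \<and> root s = NT A}"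

lemma labs_sub: "wft P t \<Longrightarrow> labs \<delta> q t \<subseteq> fst ` P \<times> UNIV"
proof
  fix x assume "wft P t" "x \<in> labs \<delta> q t"
  then obtain A c s where x: "x = (A, foldl \<delta> q (lyield c), foldl \<delta> q (lyield c @ yield s))"
    "t = plug c s" "root s = NT A" unfolding labs_def by blast
  then have "wft P s" using \<open>wft P t\<close> wft_plug by blast
  moreover obtain ts where "s = Node A ts" using x(3) root_NT by metis
  ultimately have "A \<in> fst ` P" by force
  then show "x \<in> fst ` P \<times> UNIV" using x(1) by auto
qed

lemma labs_finite: "finite P \<Longrightarrow> wft P t \<Longrightarrow> finite (labs \<delta> q (t::('n,'t) tree) :: ('n \<times> 's::finite \<times> 's) set)"
  by (rule finite_subset[OF labs_sub]) auto

lemma foldr_max_ge: "x \<in> set xs \<Longrightarrow> x \<le> foldr max xs (0::nat)"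
  by (induction xs) auto

lemma foldr_max_le: "\<forall>x\<in>set xs. x \<le> k \<Longrightarrow> foldr max xs (0::nat) \<le> k"
  by (induction xs) auto

lemma child_facts:
  assumes "ts = ls @ ch # rs"
  shows "Node A ts = plug [(A,ls,rs)] ch"
    "\<And>c s. plug ((A,ls,rs)#c) s = Node A (ls @ plug c s # rs)"
  using assms by auto

lemma height_le:
  fixes \<delta> :: "'s::finite \<Rightarrow> 't \<Rightarrow> 's"
  assumes "finite P"
  shows "wft P t \<Longrightarrow> \<not> rep \<delta> q t \<Longrightarrow> height t \<le> card (labs \<delta> q t)"
proof (induction t arbitrary: q)
  case (Leaf a) then show ?case by simp
next
  case (Node A ts)
  let ?t = "Node A ts"
  let ?L = "labs \<delta> q ?t"
  have finL: "finite ?L" using labs_finite[OF assms Node.prems(1)] .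
  have top: "(A, q, foldl \<delta> q (yield ?t)) \<in> ?L"
    unfolding labs_def by (rule CollectI, rule exI[of _ A], rule exI[of _ "[]"], rule exI[of _ ?t]) simp
  have ch: "height ch < card ?L" if chin: "ch \<in> set ts" for ch
  proof -
    obtain ls rs where ts: "ts = ls @ ch # rs" using split_list[OF chin] by blast
    define q' where "q' = foldl \<delta> q (concat (map yield ls))"
    have wch: "wft P ch" using Node.prems(1) chin by simp
    have nrep: "\<not> rep \<delta> q' ch"
    proof
      assume "rep \<delta> q' ch"
      then obtain c1 c2 s where r: "c2 \<noteq> []" "ch = plug c1 (plug c2 s)" "root (plug c2 s) = root s"
        "foldl \<delta> q' (lyield c1) = foldl \<delta> q' (lyield c1 @ lyield c2)"
        "foldl \<delta> q' (lyield c1 @ lyield c2 @ yield s) = foldl \<delta> q' (lyield c1 @ lyield c2 @ yield s @ ryield c2)"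
        unfolding rep_def by blast
      have "rep \<delta> q ?t" unfolding rep_def
        apply (rule exI[of _ "(A,ls,rs)#c1"], rule exI[of _ c2], rule exI[of _ s])
        using r ts by (simp add: q'_def)
      then show False using Node.prems(2) by simp
    qed
    have sub: "labs \<delta> q' ch \<subseteq> ?L"
    proof
      fix x assume "x \<in> labs \<delta> q' ch"
      then obtain B c s where x: "x = (B, foldl \<delta> q' (lyield c), foldl \<delta> q' (lyield c @ yield s))"
        "ch = plug c s" "root s = NT B" unfolding labs_def by blast
      show "x \<in> ?L" unfolding labs_def
        apply (rule CollectI, rule exI[of _ B], rule exI[of _ "(A,ls,rs)#c"], rule exI[of _ s])
        using x ts by (simp add: q'_def)
    qed
    have notin: "(A, q, foldl \<delta> q (yield ?t)) \<notin> labs \<delta> q' ch"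
    proof
      assume "(A, q, foldl \<delta> q (yield ?t)) \<in> labs \<delta> q' ch"
      then obtain c s where x: "q = foldl \<delta> q' (lyield c)" "foldl \<delta> q (yield ?t) = foldl \<delta> q' (lyield c @ yield s)"
        "ch = plug c s" "root s = NT A" unfolding labs_def by blast
      let ?c2 = "(A,ls,rs)#c"
      have e1: "?t = plug [] (plug ?c2 s)" using ts x by simp
      have e2: "yield ?t = lyield ?c2 @ yield s @ ryield ?c2"
        using ts x yield_plug[of c s] by simp
      have e3: "root (plug ?c2 s) = root s" using x by simp
      have e4: "foldl \<delta> q (lyield [] @ lyield ?c2) = foldl \<delta> q (lyield [])"
        using x(1) by (simp add: q'_def)
      have e5: "foldl \<delta> q (lyield [] @ lyield ?c2 @ yield s @ ryield ?c2) = foldl \<delta> q (lyield [] @ lyield ?c2 @ yield s)"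
        using e2 x(2) by (simp add: q'_def)
      have "rep \<delta> q ?t" unfolding rep_def
        by (rule exI[of _ "[]"], rule exI[of _ ?c2], rule exI[of _ s]) (use e1 e3 e4 e5 in simp)
      then show False using Node.prems(2) by simp
    qed
    have "card (labs \<delta> q' ch) < card ?L"
      using sub notin top finL by (intro psubset_card_mono) auto
    moreover have "height ch \<le> card (labs \<delta> q' ch)" using Node.IH[OF chin wch nrep] .
    ultimately show ?thesis by simp
  qed
  have "card ?L > 0" using top finL card_gt_0_iff by blast
  then have "foldr max (map height ts) 0 \<le> card ?L - 1"
    using ch by (intro foldr_max_le) fastforce
  then show ?case using \<open>card ?L > 0\<close> by simp
qed

lemma min_rep:
  "rep \<delta> q t \<Longrightarrow> \<exists>c t1. t = plug c t1 \<and> rep \<delta> (foldl \<delta> q (lyield c)) t1 \<and>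
     (\<forall>c' s. c' \<noteq> [] \<longrightarrow> t1 = plug c' s \<longrightarrow> \<not> rep \<delta> (foldl \<delta> (foldl \<delta> q (lyield c)) (lyield c')) s)"
proof (induction t arbitrary: q rule: measure_induct_rule[of tsize])
  case (less t)
  show ?case
  proof (cases "\<exists>c' s. c' \<noteq> [] \<and> t = plug c' s \<and> rep \<delta> (foldl \<delta> q (lyield c')) s")
    case True
    then obtain c' s where cs: "c' \<noteq> []" "t = plug c' s" "rep \<delta> (foldl \<delta> q (lyield c')) s" by blast
    have "tsize s < tsize t" using cs tsize_plug_less by blast
    from less.IH[OF this cs(3)] obtain c t1 where
      ct: "s = plug c t1" "rep \<delta> (foldl \<delta> (foldl \<delta> q (lyield c')) (lyield c)) t1"
      "\<forall>c'' s'. c'' \<noteq> [] \<longrightarrow> t1 = plug c'' s' \<longrightarrow> \<not> rep \<delta> (foldl \<delta> (foldl \<delta> (foldl \<delta> q (lyield c')) (lyield c)) (lyield c'')) s'"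
      by blast
    show ?thesis
      apply (rule exI[of _ "c' @ c"], rule exI[of _ t1])
      using ct cs by (simp add: plug_append lyield_append)
  next
    case False
    then show ?thesis using less.prems by (intro exI[of _ "[]"] exI[of _ t]) auto
  qed
qed

lemma yield_len:
  assumes "\<forall>(A,\<alpha>)\<in>P. length \<alpha> \<le> b" "1 \<le> b"
  shows "wft P t \<Longrightarrow> length (yield t) \<le> b ^ height t"
proof (induction t)
  case (Leaf a) then show ?case by simp
next
  case (Node A ts)
  let ?h = "foldr max (map height ts) 0"
  have "\<forall>ch\<in>set ts. length (yield ch) \<le> b ^ ?h"
  proof
    fix ch assume "ch \<in> set ts"
    then have "length (yield ch) \<le> b ^ height ch" using Node by auto
    also have "\<dots> \<le> b ^ ?h" using \<open>ch \<in> set ts\<close> assms(2) by (intro power_increasing foldr_max_ge) auto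
    finally show "length (yield ch) \<le> b ^ ?h" .
  qed
  then have "sum_list (map (length \<circ> yield) ts) \<le> sum_list (map (\<lambda>_. b ^ ?h) ts)"
    by (intro sum_list_mono) auto
  also have "\<dots> = length ts * b ^ ?h" by (simp add: sum_list_triv)
  also have "length ts \<le> b"
  proof -
    have "(A, map root ts) \<in> P" using Node.prems by simp
    then have "length (map root ts) \<le> b" using assms(1) by blast
    then show ?thesis by simp
  qed
  then have "length ts * b ^ ?h \<le> b * b ^ ?h" by simp
  finally show ?case by (simp add: length_concat)
qed



lemma pumping:
  fixes P :: "('n \<times> ('n,'t) sym list) set" and \<delta> :: "'s::finite \<Rightarrow> 't \<Rightarrow> 's"
  assumes finP: "finite P"
  shows "\<exists>K. \<forall>z. z \<in> Lang P S \<longrightarrow> foldl \<delta> q0 z = qf \<longrightarrow> K \<le> length z \<longrightarrow>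
    (\<exists>u v x y w. z = u@v@x@y@w \<and> v@y \<noteq> [] \<and> length (v@x@y) \<le> K \<and>
        u@x@w \<in> Lang P S \<and> foldl \<delta> q0 (u@x@w) = qf)"
proof -
  define b where "b = 2 + (\<Sum>p\<in>P. length (snd p))"
  have bP: "\<forall>(A,\<alpha>)\<in>P. length \<alpha> \<le> b"
  proof (clarify)
    fix A \<alpha> assume "(A,\<alpha>) \<in> P"
    then have "length (snd (A,\<alpha>)) \<le> (\<Sum>p\<in>P. length (snd p))"
      using finP by (intro member_le_sum) auto
    then show "length \<alpha> \<le> b" unfolding b_def by simp
  qed
  have b2: "2 \<le> b" unfolding b_def by simp
  define M where "M = card (fst ` P \<times> (UNIV :: ('s \<times> 's) set))"
  have labsM: "card (labs \<delta> q t) \<le> M" if "wft P t" for q and t :: "('n,'t) tree"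
    unfolding M_def using labs_sub[OF that, of \<delta> q] finP by (intro card_mono) auto
  define K where "K = b ^ Suc M"
  show ?thesis
  proof (intro exI[of _ K] allI impI)
    fix z assume zL: "z \<in> Lang P S" and acc: "foldl \<delta> q0 z = qf" and zK: "K \<le> length z"
    let ?Q = "\<lambda>t. wft P t \<and> root t = NT S \<and> yield t = z"
    obtain t0 where "?Q t0" using zL Lang_tree by metis
    from ex_has_least_nat[of ?Q t0 tsize, OF this] obtain t where
      tQ: "?Q t" and tmin: "\<And>t'. ?Q t' \<Longrightarrow> tsize t \<le> tsize t'" by blast
    have wt: "wft P t" using tQ by blast
    have "rep \<delta> q0 t"
    proof (rule ccontr)
      assume "\<not> rep \<delta> q0 t"
      then have "height t \<le> M" using height_le[OF finP wt] labsM[OF wt] le_trans by blast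
      then have "length z \<le> b ^ M" using yield_len[OF bP _ wt] tQ b2
        by (metis (no_types, lifting) le_trans one_le_numeral order_trans power_increasing)
      moreover have "b ^ M < K" unfolding K_def using b2 by simp
      ultimately show False using zK by simp
    qed
    from min_rep[OF this] obtain c t1 where
      ct: "t = plug c t1" "rep \<delta> (foldl \<delta> q0 (lyield c)) t1"
      "\<forall>c' s. c' \<noteq> [] \<longrightarrow> t1 = plug c' s \<longrightarrow> \<not> rep \<delta> (foldl \<delta> (foldl \<delta> q0 (lyield c)) (lyield c')) s"
      by blast
    define p where "p = foldl \<delta> q0 (lyield c)"
    from ct(2) obtain c1 c2 s where r: "c2 \<noteq> []" "t1 = plug c1 (plug c2 s)" "root (plug c2 s) = root s"
        "foldl \<delta> p (lyield c1) = foldl \<delta> p (lyield c1 @ lyield c2)"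
        "foldl \<delta> p (lyield c1 @ lyield c2 @ yield s) = foldl \<delta> p (lyield c1 @ lyield c2 @ yield s @ ryield c2)"
      unfolding rep_def p_def by blast
    have c1: "c1 = []"
    proof (rule ccontr)
      assume "c1 \<noteq> []"
      moreover have "rep \<delta> (foldl \<delta> p (lyield c1)) (plug c2 s)" unfolding rep_def
        apply (rule exI[of _ "[]"], rule exI[of _ c2], rule exI[of _ s])
        using r by simp
      ultimately show False using ct(3) r(2) unfolding p_def by blast
    qed
    have wt1: "wft P t1" using wt ct(1) wft_plug by blast
    have ht1: "height t1 \<le> Suc M"
    proof -
      obtain A ls rs c2' where c2: "c2 = (A,ls,rs) # c2'" using r(1) by (cases c2) auto
      let ?ts = "ls @ plug c2' s # rs"
      have t1: "t1 = Node A ?ts" using r(2) c1 c2 by simp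
      have "\<forall>h\<in>set (map height ?ts). h \<le> M"
      proof
        fix h assume "h \<in> set (map height ?ts)"
        then obtain ch where chin: "ch \<in> set ?ts" "h = height ch" by auto
        obtain ls' rs' where ts': "?ts = ls' @ ch # rs'" using split_list[OF chin(1)] by blast
        have e: "t1 = plug [(A,ls',rs')] ch" using t1 ts' by simp
        have wch: "wft P ch" using wt1 t1 chin(1) by auto
        have "\<not> rep \<delta> (foldl \<delta> p (lyield [(A,ls',rs')])) ch"
          using ct(3) e unfolding p_def by blast
        then have "height ch \<le> card (labs \<delta> (foldl \<delta> p (lyield [(A,ls',rs')])) ch)"
          using height_le[OF finP wch] by blast
        also have "\<dots> \<le> M" using labsM[OF wch] .
        finally show "h \<le> M" using chin by simp
      qed
      then have "foldr max (map height ?ts) 0 \<le> M" by (rule foldr_max_le)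
      then show ?thesis using t1 by simp
    qed
    define u where "u = lyield c"
    define v where "v = lyield c2"
    define x where "x = yield s"
    define y where "y = ryield c2"
    define w where "w = ryield c"
    have t1y: "yield t1 = v @ x @ y" using r(2) c1 yield_plug[of c2 s] by (simp add: v_def x_def y_def)
    have zdec: "z = u@v@x@y@w" using tQ ct(1) yield_plug[of c t1] t1y by (simp add: u_def w_def)
    have len: "length (v@x@y) \<le> K"
    proof -
      have "length (yield t1) \<le> b ^ height t1" using yield_len[OF bP _ wt1] b2 by simp
      also have "\<dots> \<le> b ^ Suc M" using ht1 b2 by (intro power_increasing) auto
      finally show ?thesis using t1y K_def by simp
    qed
    define t' where "t' = plug c s"
    have ws: "wft P s" using wt1 r(2) wft_plug by blast
    have rs: "root s = root t1" using r(2,3) c1 by simp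
    have wt': "wft P t'" unfolding t'_def using wft_plug_replace[of P c t1 s] wt ct(1) ws rs by simp
    have rt': "root t' = root t" unfolding t'_def using root_plug[OF rs, of c] ct(1) by simp
    have yt': "yield t' = u@x@w" unfolding t'_def using yield_plug[of c s] by (simp add: u_def x_def w_def)
    have vy: "v@y \<noteq> []"
    proof
      assume "v@y = []"
      then have "?Q t'" using wt' rt' yt' zdec tQ by simp
      moreover have "tsize t' < tsize t" unfolding t'_def using ct(1) r(1,2) c1
        by (simp add: tsize_plug_mono tsize_plug_less)
      ultimately show False using tmin by fastforce
    qed
    have inL: "u@x@w \<in> Lang P S" using Lang_tree wt' rt' yt' tQ by metis
    have sv: "foldl \<delta> p v = p" using r(4) c1 by (simp add: v_def)
    have sy: "foldl \<delta> (foldl \<delta> p x) y = foldl \<delta> p x"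
      using r(5) c1 sv by (simp add: v_def x_def y_def)
    have "foldl \<delta> q0 (u@x@w) = qf"
      using acc zdec sv sy by (simp add: p_def u_def[symmetric])
    then show "\<exists>u v x y w. z = u@v@x@y@w \<and> v@y \<noteq> [] \<and> length (v@x@y) \<le> K \<and>
        u@x@w \<in> Lang P S \<and> foldl \<delta> q0 (u@x@w) = qf"
      using zdec vy len inL by blast
  qed
qed



definition cnt :: "'a \<Rightarrow> 'a list \<Rightarrow> nat" where
  "cnt a xs = length (filter (\<lambda>x. x = a) xs)"

lemma cnt_append[simp]: "cnt a (xs @ ys) = cnt a xs + cnt a ys"
  by (simp add: cnt_def)

lemma cnt_Nil[simp]: "cnt a [] = 0" by (simp add: cnt_def)
lemma cnt_Cons[simp]: "cnt a (x # xs) = (if x = a then Suc (cnt a xs) else cnt a xs)"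
  by (simp add: cnt_def)

lemma cnt_replicate[simp]: "cnt a (replicate n b) = (if b = a then n else 0)"
  by (induction n) auto

lemma cnt_wpow[simp]: "cnt a (wpow u n) = n * cnt a u"
  by (induction n) (auto simp: wpow_def)

lemma wpow2_map: "wpow [a,b] n = map (\<lambda>p. if even p then a else b) [0..<2*n]"
proof (induction n)
  case 0 then show ?case by (simp add: wpow_def)
next
  case (Suc n)
  have "wpow [a,b] (Suc n) = wpow [a,b] n @ [a,b]"
    unfolding wpow_def by (simp add: replicate_append_same[symmetric])
  moreover have "[0..<2 * Suc n] = [0..<2*n] @ [2*n, Suc (2*n)]" by simp
  ultimately show ?case using Suc by simp
qed

lemma length_wpow2[simp]: "length (wpow [a,b] n) = 2*n"
  by (simp add: wpow2_map)

abbreviation R :: "nat \<Rightarrow> nat \<Rightarrow> nat \<Rightarrow> nat list" where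
  "R i j k \<equiv> wpow [0,3] i @ wpow [1,3] j @ wpow [2,2] k"

lemma R_nth: "p < 2*(i+j+k) \<Longrightarrow> R i j k ! p =
  (if p < 2*i then (if even p then 0 else 3) else if p < 2*i+2*j then (if even p then 1 else 3) else 2)"
  by (auto simp: nth_append wpow2_map)

lemma R_len: "length (R i j k) = 2*(i+j+k)" by simp

abbreviation W :: "nat \<Rightarrow> nat \<Rightarrow> nat list" where
  "W m n \<equiv> replicate (2*m) 0 @ replicate (4*m) 1 @ replicate n 2 @ replicate n 3"

lemma W_nth: "q < 6*m+2*n \<Longrightarrow> W m n ! q = (if q < 2*m then 0 else if q < 6*m then 1 else if q < 6*m+n then 2 else 3)"
  by (auto simp: nth_append)

lemma bdir_len[simp]: "length (bdir w) = length w" by (simp add: bdir_def)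

lemma bdir_nth: "p < length w \<Longrightarrow> bdir w ! p = (if even p then w ! (p div 2) else w ! (length w - 1 - p div 2))"
  by (simp add: bdir_def)

definition bf :: "nat \<Rightarrow> nat \<Rightarrow> nat" where
  "bf n p = (if even p then p div 2 else n - 1 - p div 2)"

lemma bf_mixed: "even (p::nat) \<Longrightarrow> odd p' \<Longrightarrow> p < n \<Longrightarrow> p' < n \<Longrightarrow> p div 2 \<noteq> n - 1 - p' div 2"
proof -
  assume "even p" "odd p'" "p < n" "p' < n"
  then obtain a b where ab: "p = 2*a" "p' = 2*b+1" by (metis evenE oddE)
  then have "p div 2 = a" "p' div 2 = b" by simp_all
  then show ?thesis using ab \<open>p < n\<close> \<open>p' < n\<close> by linarith
qed

lemma bf_inj: "inj_on (bf n) {..<n}"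
proof (rule inj_onI)
  fix p p' assume pp: "p \<in> {..<n}" "p' \<in> {..<n}" and e: "bf n p = bf n p'"
  then have pn: "p < n" "p' < n" by auto
  show "p = p'"
  proof (cases "even p"; cases "even p'")
    assume "even p" "even p'"
    then show ?thesis using e unfolding bf_def by simp (metis dvd_mult_div_cancel)
  next
    assume "even p" "odd p'"
    then show ?thesis using e bf_mixed[of p p' n] pn unfolding bf_def by simp
  next
    assume "odd p" "even p'"
    then show ?thesis using e bf_mixed[of p' p n] pn unfolding bf_def by simp
  next
    assume "odd p" "odd p'"
    then have "p div 2 = p' div 2" using e pn unfolding bf_def by simp
    then show ?thesis using \<open>odd p\<close> \<open>odd p'\<close> by (metis odd_two_times_div_two_succ)
  qed
qed

lemma bf_range: "bf n ` {..<n} = {..<n}"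
proof -
  have "bf n ` {..<n} \<subseteq> {..<n}" unfolding bf_def by auto
  moreover have "card (bf n ` {..<n}) = card {..<n}" using bf_inj card_image by blast
  ultimately show ?thesis by (simp add: card_subset_eq)
qed

lemma bdir_cnt: "cnt a (bdir w) = cnt a w"
proof -
  let ?n = "length w"
  have 1: "cnt a (bdir w) = card {p. p < ?n \<and> w ! (bf ?n p) = a}"
    unfolding cnt_def length_filter_conv_card bdir_len
    by (intro arg_cong[where f=card] Collect_cong) (auto simp: bdir_nth bf_def)
  have 2: "cnt a w = card {q. q < ?n \<and> w ! q = a}"
    unfolding cnt_def length_filter_conv_card by simp
  have "bf ?n ` {p. p < ?n \<and> w ! (bf ?n p) = a} = {q. q < ?n \<and> w ! q = a}"
  proof
    show "bf ?n ` {p. p < ?n \<and> w ! bf ?n p = a} \<subseteq> {q. q < ?n \<and> w ! q = a}"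
      using bf_range by auto
  next
    show "{q. q < ?n \<and> w ! q = a} \<subseteq> bf ?n ` {p. p < ?n \<and> w ! bf ?n p = a}"
    proof
      fix q assume q: "q \<in> {q. q < ?n \<and> w ! q = a}"
      then have "q \<in> bf ?n ` {..<?n}" using bf_range by auto
      then obtain p where "p < ?n" "q = bf ?n p" by auto
      then show "q \<in> bf ?n ` {p. p < ?n \<and> w ! bf ?n p = a}" using q by auto
    qed
  qed
  moreover have "inj_on (bf ?n) {p. p < ?n \<and> w ! (bf ?n p) = a}"
    using bf_inj by (rule inj_on_subset) auto
  ultimately have "card {p. p < ?n \<and> w ! (bf ?n p) = a} = card {q. q < ?n \<and> w ! q = a}"
    using card_image by fastforce
  then show ?thesis using 1 2 by simp
qed

lemma R_eq_bdir: "R (2*m) (4*m) (3*m) = bdir (W m (6*m))"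
proof (rule nth_equalityI)
  show "length (R (2*m) (4*m) (3*m)) = length (bdir (W m (6*m)))" by simp
next
  fix p assume "p < length (R (2*m) (4*m) (3*m))"
  then have p: "p < 18*m" by simp
  have A: "R (2*m) (4*m) (3*m) ! p = (if p < 4*m then (if even p then 0 else 3) else if p < 12*m then (if even p then 1 else 3) else 2)"
    using p R_nth[of p "2*m" "4*m" "3*m"] by simp
  have B: "bdir (W m (6*m)) ! p = (if even p then W m (6*m) ! (p div 2) else W m (6*m) ! (18*m - 1 - p div 2))"
    using p bdir_nth[of p "W m (6*m)"] by simp
  have C1: "W m (6*m) ! (p div 2) = (if p div 2 < 2*m then 0 else if p div 2 < 6*m then 1 else 2)"
    using p W_nth[of "p div 2" m "6*m"] by simp
  have d: "p div 2 < 9*m" using p by presburger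
  have C2: "W m (6*m) ! (18*m - 1 - p div 2) = (if 18*m - 1 - p div 2 < 12*m then 2 else 3)"
    using p d W_nth[of "18*m - 1 - p div 2" m "6*m"] by auto
  show "R (2*m) (4*m) (3*m) ! p = bdir (W m (6*m)) ! p"
    unfolding A B C1 C2 using p by (auto split: if_splits)
qed



definition G :: "(nat \<times> (nat, nat) sym list) set" where
  "G = {(0, [NT 1, NT 2]), (1, [Tm 0, Tm 0, NT 1, Tm 1, Tm 1, Tm 1, Tm 1]),
        (1, [Tm 0, Tm 0, Tm 1, Tm 1, Tm 1, Tm 1]), (2, [Tm 2, NT 2, Tm 3]), (2, [Tm 2, Tm 3])}"

lemma map_root_Tm: "map root ts = map Tm w \<Longrightarrow> ts = map Leaf w"
proof (induction ts arbitrary: w)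
  case (Cons t ts) then show ?case by (cases w) (auto simp: root_Tm)
qed simp

lemma split3: "map root ts = map Tm a @ [NT B] @ map Tm c \<Longrightarrow>
  \<exists>t. ts = map Leaf a @ [t] @ map Leaf c \<and> root t = NT B"
proof -
  assume "map root ts = map Tm a @ [NT B] @ map Tm c"
  then obtain us vs where 1: "ts = us @ vs" "map Tm a = map root us" "[NT B] @ map Tm c = map root vs"
    unfolding map_eq_append_conv by blast
  from 1(3) have "map root vs = [NT B] @ map Tm c" by simp
  then obtain t vs' where 2: "vs = t # vs'" "root t = NT B" "map root vs' = map Tm c"
    by (cases vs) auto
  show ?thesis using 1 2 map_root_Tm[of us a] map_root_Tm[of vs' c] by auto
qed

lemma yield_leaves[simp]: "concat (map yield (map Leaf w)) = w"
  by (induction w) auto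

lemma X_tree: "wft G t \<Longrightarrow> root t = NT 1 \<Longrightarrow> \<exists>m\<ge>1. yield t = replicate (2*m) 0 @ replicate (4*m) 1"
proof (induction t)
  case (Leaf a) then show ?case by simp
next
  case (Node A ts)
  then have A: "A = 1" and P: "(1, map root ts) \<in> G" by auto
  then consider "map root ts = [Tm 0, Tm 0, NT 1, Tm 1, Tm 1, Tm 1, Tm 1]"
    | "map root ts = [Tm 0, Tm 0, Tm 1, Tm 1, Tm 1, Tm 1]" unfolding G_def by auto
  then show ?case
  proof cases
    case 1
    then have "map root ts = map Tm [0,0] @ [NT 1] @ map Tm [1,1,1,1]" by simp
    from split3[OF this] obtain t where t: "ts = map Leaf [0,0] @ [t] @ map Leaf [1,1,1,1]" "root t = NT 1"
      by blast
    have "wft G t" using Node.prems t by auto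
    then obtain m where m: "m \<ge> 1" "yield t = replicate (2*m) 0 @ replicate (4*m) 1"
      using Node.IH[of t] t by auto
    have "yield (Node A ts) = replicate (2*Suc m) 0 @ replicate (4*Suc m) 1"
      using t m by (simp add: replicate_append_same[symmetric] numeral_eq_Suc)
    then show ?thesis by (intro exI[of _ "Suc m"]) simp
  next
    case 2
    then have "ts = map Leaf [0,0,1,1,1,1]" using map_root_Tm[of ts "[0,0,1,1,1,1]"] by simp
    then show ?thesis by (intro exI[of _ 1]) (simp add: numeral_eq_Suc)
  qed
qed

lemma Y_tree: "wft G t \<Longrightarrow> root t = NT 2 \<Longrightarrow> \<exists>n\<ge>1. yield t = replicate n 2 @ replicate n 3"
proof (induction t)
  case (Leaf a) then show ?case by simp
next
  case (Node A ts)
  then have A: "A = 2" and P: "(2, map root ts) \<in> G" by auto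
  then consider "map root ts = [Tm 2, NT 2, Tm 3]"
    | "map root ts = [Tm 2, Tm 3]" unfolding G_def by auto
  then show ?case
  proof cases
    case 1
    then have "map root ts = map Tm [2] @ [NT 2] @ map Tm [3]" by simp
    from split3[OF this] obtain t where t: "ts = map Leaf [2] @ [t] @ map Leaf [3]" "root t = NT 2"
      by blast
    have "wft G t" using Node.prems t by auto
    then obtain n where n: "n \<ge> 1" "yield t = replicate n 2 @ replicate n 3"
      using Node.IH[of t] t by auto
    have "yield (Node A ts) = replicate (Suc n) 2 @ replicate (Suc n) 3"
      using t n by (simp add: replicate_append_same[symmetric])
    then show ?thesis by (intro exI[of _ "Suc n"]) simp
  next
    case 2
    then have "ts = map Leaf [2,3]" using map_root_Tm[of ts "[2,3]"] by simp
    then show ?thesis by (intro exI[of _ 1]) simp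
  qed
qed

fun tX :: "nat \<Rightarrow> (nat,nat) tree" where
  "tX 0 = Node 1 (map Leaf [0,0,1,1,1,1])"
| "tX (Suc k) = Node 1 (map Leaf [0,0] @ [tX k] @ map Leaf [1,1,1,1])"

fun tY :: "nat \<Rightarrow> (nat,nat) tree" where
  "tY 0 = Node 2 (map Leaf [2,3])"
| "tY (Suc k) = Node 2 (map Leaf [2] @ [tY k] @ map Leaf [3])"

lemma tX_props: "wft G (tX k) \<and> root (tX k) = NT 1 \<and> yield (tX k) = replicate (2*Suc k) 0 @ replicate (4*Suc k) 1"
proof (induction k)
  case 0 then show ?case by (simp add: G_def numeral_eq_Suc)
next
  case (Suc k) then show ?case
    by (simp add: G_def replicate_append_same[symmetric] numeral_eq_Suc)
qed

lemma tY_props: "wft G (tY k) \<and> root (tY k) = NT 2 \<and> yield (tY k) = replicate (Suc k) 2 @ replicate (Suc k) 3"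
proof (induction k)
  case 0 then show ?case by (simp add: G_def)
next
  case (Suc k) then show ?case
    by (simp add: G_def replicate_append_same[symmetric])
qed

lemma Lang_G: "Lang G 0 = {replicate (2*m) 0 @ replicate (4*m) 1 @ replicate n 2 @ replicate n 3 | m n. m \<ge> 1 \<and> n \<ge> 1}"
proof
  show "Lang G 0 \<subseteq> {replicate (2*m) 0 @ replicate (4*m) 1 @ replicate n 2 @ replicate n 3 | m n. m \<ge> 1 \<and> n \<ge> 1}"
  proof
    fix w assume "w \<in> Lang G 0"
    then obtain t where t: "wft G t" "root t = NT 0" "yield t = w" using Lang_tree by metis
    then obtain ts where ts: "t = Node 0 ts" using root_NT by metis
    then have "(0, map root ts) \<in> G" using t by simp
    then have "map root ts = [NT 1, NT 2]" unfolding G_def by auto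
    then obtain t1 t2 where "ts = [t1, t2]" "root t1 = NT 1" "root t2 = NT 2"
      by (cases ts; cases "tl ts"; cases "tl (tl ts)") auto
    moreover have "wft G t1" "wft G t2" using t ts calculation by auto
    ultimately obtain m n where "m \<ge> 1" "yield t1 = replicate (2*m) 0 @ replicate (4*m) 1"
      "n \<ge> 1" "yield t2 = replicate n 2 @ replicate n 3"
      using X_tree Y_tree by metis
    then show "w \<in> {replicate (2*m) 0 @ replicate (4*m) 1 @ replicate n 2 @ replicate n 3 | m n. m \<ge> 1 \<and> n \<ge> 1}"
      using t ts \<open>ts = [t1,t2]\<close> by auto
  qed
next
  show "{replicate (2*m) 0 @ replicate (4*m) 1 @ replicate n 2 @ replicate n 3 | m n. m \<ge> 1 \<and> n \<ge> 1} \<subseteq> Lang G 0"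
  proof clarify
    fix m n :: nat assume mn: "m \<ge> 1" "n \<ge> 1"
    obtain k l where kl: "m = Suc k" "n = Suc l" using mn by (metis Suc_le_D One_nat_def)
    let ?t = "Node 0 [tX k, tY l]"
    have "wft G ?t" using tX_props[of k] tY_props[of l] by (simp add: G_def)
    moreover have "yield ?t = replicate (2*m) 0 @ replicate (4*m) 1 @ replicate n 2 @ replicate n 3"
      using tX_props[of k] tY_props[of l] kl by simp
    ultimately show "replicate (2*m) 0 @ replicate (4*m) 1 @ replicate n 2 @ replicate n 3 \<in> Lang G 0"
      using Lang_tree[of _ G 0] by fastforce
  qed
qed

lemma CFL_L: "CFL {replicate (2*m) (0::nat) @ replicate (4*m) 1 @ replicate n 2 @ replicate n 3 | m n. m \<ge> 1 \<and> n \<ge> 1}"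
  unfolding CFL_def using Lang_G[symmetric] by (intro exI[of _ G] exI[of _ 0]) (simp add: G_def)



datatype st = St | A0 | B0 | A1 | B1 | A2 | D | Dead

lemma UNIV_st: "(UNIV :: st set) = {St, A0, B0, A1, B1, A2, D, Dead}"
  using st.exhaust by auto

instance st :: finite
  by standard (simp add: UNIV_st)

fun dl :: "st \<Rightarrow> nat \<Rightarrow> st" where
  "dl St a = (if a = 0 then A0 else Dead)"
| "dl A0 a = (if a = 3 then B0 else Dead)"
| "dl B0 a = (if a = 0 then A0 else if a = 1 then A1 else Dead)"
| "dl A1 a = (if a = 3 then B1 else Dead)"
| "dl B1 a = (if a = 1 then A1 else if a = 2 then A2 else Dead)"
| "dl A2 a = (if a = 2 then D else Dead)"
| "dl D a = (if a = 2 then A2 else Dead)"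
| "dl Dead a = Dead"

definition pend :: "st \<Rightarrow> nat" where
  "pend s = (if s = A0 \<or> s = A1 then 1 else 0)"

lemma dead_stays: "foldl dl Dead w = Dead"
  by (induction w) auto

lemma dl_inv: "foldl dl s w \<noteq> Dead \<Longrightarrow> cnt 0 w + cnt 1 w + pend s = cnt 3 w + pend (foldl dl s w)"
proof (induction w arbitrary: s)
  case Nil then show ?case by simp
next
  case (Cons a w)
  show ?case
  proof (cases "dl s a = Dead")
    case True then show ?thesis using Cons.prems dead_stays by simp
  next
    case False
    then have "foldl dl (dl s a) w \<noteq> Dead" using Cons.prems by simp
    from Cons.IH[OF this] False show ?thesis
      by (cases s) (auto simp: pend_def split: if_splits)
  qed
qed

lemma wpow_Suc: "wpow u (Suc n) = u @ wpow u n" by (simp add: wpow_def)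

lemma r1: "foldl dl B0 (wpow [0,3] i) = B0" by (induction i) (auto simp: wpow_Suc wpow_def)
lemma r2: "foldl dl B1 (wpow [1,3] i) = B1" by (induction i) (auto simp: wpow_Suc wpow_def)
lemma r2': "foldl dl B1 (wpow [Suc 0,3] i) = B1" using r2 by simp
lemma r3: "foldl dl D (wpow [2,2] i) = D" by (induction i) (auto simp: wpow_Suc wpow_def)

lemma R_acc: "i \<ge> 1 \<Longrightarrow> j \<ge> 1 \<Longrightarrow> k \<ge> 1 \<Longrightarrow> foldl dl St (R i j k) = D"
proof -
  assume "i \<ge> 1" "j \<ge> 1" "k \<ge> 1"
  then obtain i' j' k' where "i = Suc i'" "j = Suc j'" "k = Suc k'"
    by (metis Suc_le_D One_nat_def)
  then show ?thesis by (simp add: wpow_Suc r1 r2 r2' r3)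
qed

lemma cnt_pos_mem: "cnt a xs > 0 \<Longrightarrow> a \<in> set xs"
  by (induction xs) (auto split: if_splits)

lemma mem_cnt_pos: "a \<in> set xs \<Longrightarrow> cnt a xs > 0"
  by (induction xs) auto



lemma part2:
  fixes L :: "nat list set"
  defines "L \<equiv> {replicate (2*m) 0 @ replicate (4*m) 1 @ replicate n 2 @ replicate n 3 | m n. m \<ge> 1 \<and> n \<ge> 1}"
  shows "bdir ` L \<inter> {wpow [0,3] i @ wpow [1,3] j @ wpow [2,2] k | i j k. i \<ge> 1 \<and> j \<ge> 1 \<and> k \<ge> 1}
        = {wpow [0,3] (2*m) @ wpow [1,3] (4*m) @ wpow [2,2] (3*m) | m. m \<ge> 1}"
proof
  show "bdir ` L \<inter> {R i j k | i j k. i \<ge> 1 \<and> j \<ge> 1 \<and> k \<ge> 1} \<subseteq> {R (2*m) (4*m) (3*m) | m. m \<ge> 1}"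
  proof
    fix z assume "z \<in> bdir ` L \<inter> {R i j k | i j k. i \<ge> 1 \<and> j \<ge> 1 \<and> k \<ge> 1}"
    then have zb: "z \<in> bdir ` L" and zr: "z \<in> {R i j k | i j k. i \<ge> 1 \<and> j \<ge> 1 \<and> k \<ge> 1}" by auto
    from zb obtain ww where ww: "ww \<in> L" "z = bdir ww" by (rule imageE)
    from ww(1) obtain m n where mn: "ww = W m n" "m \<ge> 1" "n \<ge> 1" unfolding L_def by auto
    from zr obtain i j k where ijk: "z = R i j k" by auto
    have z: "z = bdir (W m n)" "m \<ge> 1" "n \<ge> 1" "z = R i j k" using ww mn ijk by auto
    have "cnt a (R i j k) = cnt a (W m n)" for a using z(1,4) bdir_cnt[of a "W m n"] by simp
    from this[of 0] this[of 1] this[of 2] this[of 3]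
    have "i = 2*m" "j = 4*m" "2*k = n" "i + j = n" by auto
    then have "k = 3*m" by simp
    then have "z = R (2*m) (4*m) (3*m)" using z(4) \<open>i = 2*m\<close> \<open>j = 4*m\<close> by simp
    then show "z \<in> {R (2*m) (4*m) (3*m) | m. m \<ge> 1}" using z by blast
  qed
next
  show "{R (2*m) (4*m) (3*m) | m. m \<ge> 1} \<subseteq> bdir ` L \<inter> {R i j k | i j k. i \<ge> 1 \<and> j \<ge> 1 \<and> k \<ge> 1}"
  proof clarify
    fix m :: nat assume m: "m \<ge> 1"
    have "\<exists>mm nn. W m (6*m) = W mm nn \<and> mm \<ge> 1 \<and> nn \<ge> 1" using m by (intro exI[of _ m] exI[of _ "6*m"]) simp
    then have "W m (6*m) \<in> L" unfolding L_def by simp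
    then have "R (2*m) (4*m) (3*m) \<in> bdir ` L" using R_eq_bdir by simp
    moreover have "\<exists>i j k. R (2*m) (4*m) (3*m) = R i j k \<and> i \<ge> 1 \<and> j \<ge> 1 \<and> k \<ge> 1"
      using m by (intro exI[of _ "2*m"] exI[of _ "4*m"] exI[of _ "3*m"]) simp
    then have "R (2*m) (4*m) (3*m) \<in> {R i j k | i j k. i \<ge> 1 \<and> j \<ge> 1 \<and> k \<ge> 1}" by simp
    ultimately show "R (2*m) (4*m) (3*m) \<in> bdir ` L \<inter> {R i j k | i j k. i \<ge> 1 \<and> j \<ge> 1 \<and> k \<ge> 1}" by blast
  qed
qed

lemma zR_nth: "p < 18*m \<Longrightarrow> R (2*m) (4*m) (3*m) ! p = (if p < 4*m then (if even p then 0 else 3) else if p < 12*m then (if even p then 1 else 3) else 2)"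
  using R_nth[of p "2*m" "4*m" "3*m"] by simp

lemma zR0: "p < 18*m \<Longrightarrow> R (2*m) (4*m) (3*m) ! p = 0 \<Longrightarrow> p < 4*m"
  using zR_nth[of p m] by (cases "p < 4*m"; cases "p < 12*m"; cases "even p") simp_all

lemma zR2: "p < 18*m \<Longrightarrow> R (2*m) (4*m) (3*m) ! p = 2 \<Longrightarrow> 12*m \<le> p"
  using zR_nth[of p m] by (cases "p < 4*m"; cases "p < 12*m"; cases "even p") simp_all

lemma part3:
  fixes L :: "nat list set"
  defines "L \<equiv> {replicate (2*m) 0 @ replicate (4*m) 1 @ replicate n 2 @ replicate n 3 | m n. m \<ge> 1 \<and> n \<ge> 1}"
  shows "\<not> CFL (bdir ` L)"
proof
  assume "CFL (bdir ` L)"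
  then obtain P :: "(nat \<times> (nat, nat) sym list) set" and S where P: "finite P" "bdir ` L = Lang P S"
    unfolding CFL_def by blast
  from pumping[OF P(1), of S dl St D] obtain K where K:
    "\<And>z. z \<in> Lang P S \<Longrightarrow> foldl dl St z = D \<Longrightarrow> K \<le> length z \<Longrightarrow>
    (\<exists>u v x y w. z = u@v@x@y@w \<and> v@y \<noteq> [] \<and> length (v@x@y) \<le> K \<and>
        u@x@w \<in> Lang P S \<and> foldl dl St (u@x@w) = D)" by blast
  define m where "m = Suc K"
  define z where "z = R (2*m) (4*m) (3*m)"
  have "\<exists>mm nn. W m (6*m) = W mm nn \<and> mm \<ge> 1 \<and> nn \<ge> 1" by (intro exI[of _ m] exI[of _ "6*m"]) (simp add: m_def)
  then have "W m (6*m) \<in> L" unfolding L_def by simp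
  then have "z \<in> bdir ` L" unfolding z_def using R_eq_bdir by simp
  then have zL: "z \<in> Lang P S" using P(2) by simp
  have zacc: "foldl dl St z = D" unfolding z_def m_def by (rule R_acc) auto
  have zlen: "K \<le> length z" unfolding z_def m_def by simp
  from K[OF zL zacc zlen] obtain u v x y w where
    d: "z = u@v@x@y@w" "v@y \<noteq> []" "length (v@x@y) \<le> K" "u@x@w \<in> Lang P S" "foldl dl St (u@x@w) = D"
    by blast
  from d(4) P(2) have "u@x@w \<in> bdir ` L" by simp
  then obtain ww where ww: "ww \<in> L" "u@x@w = bdir ww" by (rule imageE)
  from ww(1) obtain m' n' where "ww = W m' n'" unfolding L_def by auto
  then have w': "u@x@w = bdir (W m' n')" using ww by simp
  have cw': "cnt a (u@x@w) = cnt a (W m' n')" for a using w' bdir_cnt[of a "W m' n'"] by simp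
  have "cnt 0 (u@x@w) + cnt 1 (u@x@w) + pend St = cnt 3 (u@x@w) + pend D"
    using dl_inv[of St "u@x@w"] d(5) by simp
  then have n': "n' = 6*m'" using cw'[of 0] cw'[of 1] cw'[of 3] by (simp add: pend_def)
  have cz: "cnt a z = cnt a (u@x@w) + cnt a v + cnt a y" for a using d(1) by simp
  have c0: "2*m = 2*m' + (cnt 0 v + cnt 0 y)" using cz[of 0] cw'[of 0] unfolding z_def by simp
  have c1: "4*m = 4*m' + (cnt 1 v + cnt 1 y)" using cz[of 1] cw'[of 1] unfolding z_def by simp
  have c2: "6*m = 6*m' + (cnt 2 v + cnt 2 y)" using cz[of 2] cw'[of 2] n' unfolding z_def by simp
  have c3: "6*m = 6*m' + (cnt 3 v + cnt 3 y)" using cz[of 3] cw'[of 3] n' unfolding z_def by simp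
  have setz: "set z \<subseteq> {0,1,2,3}" unfolding z_def by (auto simp: wpow_def)
  have "m' \<noteq> m"
  proof
    assume "m' = m"
    obtain e where e: "e \<in> set (v@y)" using d(2) by (cases "v@y") auto
    then have "e \<in> set z" using d(1) by auto
    then have ein: "e \<in> {0,1,2,3}" using setz by auto
    have pos: "cnt e v + cnt e y > 0" using mem_cnt_pos[OF e] by simp
    have z0: "cnt 0 v + cnt 0 y = 0" using c0 \<open>m' = m\<close> by linarith
    have z1: "cnt 1 v + cnt 1 y = 0" using c1 \<open>m' = m\<close> by linarith
    have z2: "cnt 2 v + cnt 2 y = 0" using c2 \<open>m' = m\<close> by linarith
    have z3: "cnt 3 v + cnt 3 y = 0" using c3 \<open>m' = m\<close> by linarith
    from ein consider "e = 0" | "e = 1" | "e = 2" | "e = 3" by blast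
    then show False using pos z0 z1 z2 z3 by cases simp_all
  qed
  then have "m' < m" using c0 by linarith
  then have "cnt 0 v + cnt 0 y > 0" "cnt 2 v + cnt 2 y > 0" using c0 c2 by linarith+
  then have "cnt 0 (v@x@y) > 0" "cnt 2 (v@x@y) > 0" by auto
  then have in0: "0 \<in> set (v@x@y)" and in2: "2 \<in> set (v@x@y)" by (simp_all only: cnt_pos_mem)
  define f where "f = v@x@y"
  have zf: "z = u @ f @ w" using d(1) f_def by simp
  obtain i where i: "i < length f" "f ! i = 0" using in0 unfolding f_def in_set_conv_nth by blast
  obtain j where j: "j < length f" "f ! j = 2" using in2 unfolding f_def in_set_conv_nth by blast
  have lz: "length z = 2*(2*m + 4*m + 3*m)" unfolding z_def by simp
  have zi: "z ! (length u + i) = 0" using zf i by (simp add: nth_append)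
  have zj: "z ! (length u + j) = 2" using zf j by (simp add: nth_append)
  have pi: "length u + i < 2*(2*m + 4*m + 3*m)" using zf i lz by simp
  have pj: "length u + j < 2*(2*m + 4*m + 3*m)" using zf j lz by simp
  have "length u + i < 4*m"
    using zi pi zR0[of "length u + i" m] unfolding z_def by simp
  moreover have "length u + j \<ge> 12*m"
    using zj pj zR2[of "length u + j" m] unfolding z_def by simp
  ultimately have "length f > 8*m" using j(1) by linarith
  then show False using d(3) unfolding f_def m_def by simp
qed


theorem mainTheorem16:
  fixes L :: "nat list set"
  defines "L \<equiv> {replicate (2*m) 0 @ replicate (4*m) 1 @ replicate n 2 @ replicate n 3 | m n. m \<ge> 1 \<and> n \<ge> 1}"
  shows "CFL L
    \<and> bdir ` L \<inter> {wpow [0,3] i @ wpow [1,3] j @ wpow [2,2] k | i j k. i \<ge> 1 \<and> j \<ge> 1 \<and> k \<ge> 1}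
        = {wpow [0,3] (2*m) @ wpow [1,3] (4*m) @ wpow [2,2] (3*m) | m. m \<ge> 1}
    \<and> \<not> CFL (bdir ` L)
    \<and> \<not> (\<forall>K :: nat list set. CFL K \<longrightarrow> CFL (bdir ` K))"
proof -
  have 1: "CFL L" unfolding L_def by (rule CFL_L)
  have 2: "bdir ` L \<inter> {wpow [0,3] i @ wpow [1,3] j @ wpow [2,2] k | i j k. i \<ge> 1 \<and> j \<ge> 1 \<and> k \<ge> 1}
        = {wpow [0,3] (2*m) @ wpow [1,3] (4*m) @ wpow [2,2] (3*m) | m. m \<ge> 1}"
    unfolding L_def by (rule part2)
  have 3: "\<not> CFL (bdir ` L)" unfolding L_def by (rule part3)
  have 4: "\<not> (\<forall>K :: nat list set. CFL K \<longrightarrow> CFL (bdir ` K))"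
  proof
    assume "\<forall>K :: nat list set. CFL K \<longrightarrow> CFL (bdir ` K)"
    then have "CFL (bdir ` L)" using 1 by simp
    then show False using 3 by simp
  qed
  show ?thesis by (intro conjI 1 2 3 4)
qed

end
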